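(* Consider the random process defined by $x(t+1)=x(t)-L(t)x(t)$, $t\in\mathbb{Z}_{\ge0}$, with deterministic initial condition $x(0)\in\mathbb{R}^I$. Assume that $\mathbf{1}^*\mathbb{E}[L(t)]=0$ and that there exists $\gamma>0$ such that $$\mathbb{E}[L(t)^*\mathbf{1}\mathbf{1}^*L(t)]\le \gamma\,\mathbb{E}[L(t)+L(t)^*-L(t)^*L(t)].$$ Then for every $t\ge 0$, $$\mathbb{E}\big[(\bar x(t)-\bar x(0))^2\big]\le \frac{\gamma}{N+\gamma}\,V(x(0)).$$ Moreover, if the system converges to consensus almost surely, i.e. $x(t)\to x_\infty\mathbf{1}$ for some random scalar $x_\infty\in\mathbb{R}$, then $\mathbb{E}[(x_\infty-\bar x(0))^2]\le \frac{\gamma}{N+\gamma}V(x(0))$.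
   Context: Let $I$ be a finite set of $N$ nodes. For each $t\in\mathbb{Z}_{\ge0}$ let $A(t)=(a_{ij}(t))_{i,j\in I}$ be a random matrix with $a_{ij}(t)\ge 0$ and $\sum_{\ell\in I}a_{i\ell}(t)=1$ for all $i$; the matrices $A(t)$, $t\ge0$, are independent and identically distributed (in particular $A(t)$ is independent of $x(t)$). Let $L(t)$ be the associated Laplacian: $L_{ij}(t)=-a_{ij}(t)$ for $i\ne j$ and $L_{ii}(t)=\sum_{j\ne i}a_{ij}(t)$. $\mathbf{1}$ is the all-ones vector, $M^*$ denotes the (conjugate) transpose. For $y\in\mathbb{R}^I$, $\bar y=\frac1N\sum_i y_i$ and $V(y)=\frac1N\sum_i(y_i-\bar y)^2$. For square matrices, $A\le B$ means $A-B$ is negative semidefinite. *)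

theory Defs
  imports "HOL-Probability.Probability"
begin

text \<open>Nodes are the elements of a finite type 'i, so N = CARD('i).
  Vectors in R^I are real^'i, matrices are real^'i^'i.\<close>

definition laplacian :: "real^'i^'i \<Rightarrow> real^'i^'i::finite" where
  "laplacian A = (\<chi> i j. if i = j then (\<Sum>k\<in>UNIV - {i}. A $ i $ k) else - A $ i $ j)"

definition ones_vec :: "real^'i" where
  "ones_vec = (\<chi> i. 1)"

definition ones_mat :: "real^'i^'i" where
  "ones_mat = (\<chi> i j. 1)"

definition avg :: "real^'i::finite \<Rightarrow> real" where
  "avg y = (\<Sum>i\<in>UNIV. y $ i) / real CARD('i)"

definition Vdis :: "real^'i::finite \<Rightarrow> real" where
  "Vdis y = (\<Sum>i\<in>UNIV. (y $ i - avg y)^2) / real CARD('i)"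

definition mat_expectation :: "'w measure \<Rightarrow> ('w \<Rightarrow> real^'i^'j) \<Rightarrow> real^'i^'j" where
  "mat_expectation M X = (\<chi> i j. prob_space.expectation M (\<lambda>\<omega>. X \<omega> $ i $ j))"

definition neg_semidef :: "real^'i^'i \<Rightarrow> bool" where
  "neg_semidef P \<longleftrightarrow> (\<forall>v. v \<bullet> (P *v v) \<le> 0)"

definition loewner_le :: "real^'i^'i \<Rightarrow> real^'i^'i \<Rightarrow> bool" where
  "loewner_le P Q \<longleftrightarrow> neg_semidef (P - Q)"

primrec xproc :: "(nat \<Rightarrow> 'w \<Rightarrow> real^'i^'i) \<Rightarrow> real^'i::finite \<Rightarrow> nat \<Rightarrow> 'w \<Rightarrow> real^'i" where
  "xproc A x0 0 \<omega> = x0"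
| "xproc A x0 (Suc t) \<omega> = xproc A x0 t \<omega> - laplacian (A t \<omega>) *v xproc A x0 t \<omega>"

end

theory Submission
  imports Defs
begin


lemma vec_meas:
  fixes f :: "'a \<Rightarrow> real^'n"
  assumes "\<And>i. (\<lambda>x. f x $ i) \<in> borel_measurable M"
  shows "f \<in> borel_measurable M"
proof (rule borel_measurable_euclidean_space[THEN iffD2], rule ballI)
  fix b :: "real^'n" assume "b \<in> Basis"
  then obtain i u where u: "u \<in> (Basis::real set)" and b: "b = axis i u"
    unfolding Basis_vec_def by blast
  have "u = 1" using u by simp
  then have "\<And>x. f x \<bullet> b = f x $ i" by (simp add: b cart_eq_inner_axis)
  then show "(\<lambda>x. f x \<bullet> b) \<in> borel_measurable M"
    using assms[of i] by simp
qed

lemma nth_meas: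
  fixes f :: "'a \<Rightarrow> 'b::real_normed_vector^'n"
  assumes "f \<in> borel_measurable M"
  shows "(\<lambda>x. f x $ i) \<in> borel_measurable M"
  by (rule measurable_compose[OF assms borel_measurable_continuous_onI])
     (intro continuous_on_component continuous_on_id)

definition xp :: "real^'i::finite \<Rightarrow> (nat \<Rightarrow> real^'i^'i) \<Rightarrow> nat \<Rightarrow> real^'i" where
  "xp x0 h t = xproc (\<lambda>s (_::unit). h s) x0 t ()"

lemma xp_0[simp]: "xp x0 h 0 = x0" by (simp add: xp_def)
lemma xp_Suc[simp]: "xp x0 h (Suc t) = xp x0 h t - laplacian (h t) *v xp x0 h t"
  by (simp add: xp_def)

lemma xproc_xp: "xproc A x0 t \<omega> = xp x0 (\<lambda>s. A s \<omega>) t"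
  by (induction t) auto

lemma xp_cong: "(\<And>s. s < t \<Longrightarrow> h s = h' s) \<Longrightarrow> xp x0 h t = xp x0 h' t"
  by (induction t) auto

lemma lap_nth: "laplacian B $ i $ j = (if i = j then (\<Sum>k\<in>UNIV - {i}. B $ i $ k) else - B $ i $ j)"
  by (simp add: laplacian_def)

lemma lap_entry_meas:
  fixes g :: "'a \<Rightarrow> real^'i::finite^'i"
  assumes "g \<in> borel_measurable M"
  shows "(\<lambda>x. laplacian (g x) $ i $ j) \<in> borel_measurable M"
proof (cases "i = j")
  case True
  then show ?thesis unfolding lap_nth
    by (simp, intro borel_measurable_sum nth_meas assms)
next
  case False
  then show ?thesis unfolding lap_nth
    by (simp, intro borel_measurable_uminus nth_meas assms)
qed

lemma step_meas:
  fixes g :: "'a \<Rightarrow> real^'i::finite^'i" and x :: "'a \<Rightarrow> real^'i"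
  assumes "g \<in> borel_measurable M" "x \<in> borel_measurable M"
  shows "(\<lambda>w. x w - laplacian (g w) *v x w) \<in> borel_measurable M"
proof (rule vec_meas)
  fix i
  show "(\<lambda>w. (x w - laplacian (g w) *v x w) $ i) \<in> borel_measurable M"
    unfolding vector_minus_component matrix_vector_mult_def vec_lambda_beta
    by (intro borel_measurable_diff borel_measurable_sum borel_measurable_times
          lap_entry_meas nth_meas assms)
qed

lemma xp_meas:
  fixes x0 :: "real^'i::finite"
  shows "t \<le> n \<Longrightarrow> (\<lambda>h. xp x0 h t) \<in> borel_measurable (PiM {..<n} (\<lambda>_. borel))"
proof (induction t)
  case 0 then show ?case by simp
next
  case (Suc t)
  have "(\<lambda>h. h t) \<in> measurable (PiM {..<n} (\<lambda>_. borel)) (borel :: (real^'i^'i) measure)"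
    using Suc.prems by (intro measurable_component_singleton) auto
  then show ?case using Suc by (simp, intro step_meas) auto
qed

lemma xproc_meas:
  fixes x0 :: "real^'i::finite"
  assumes "\<And>t. A t \<in> borel_measurable M"
  shows "(\<lambda>w. xproc A x0 t w) \<in> borel_measurable M"
  by (induction t) (auto intro!: step_meas assms)



lemma quad_expand:
  fixes P :: "real^'i::finite^'i"
  shows "r * (w \<bullet> (P *v v)) = (\<Sum>j\<in>UNIV. \<Sum>l\<in>UNIV. (r * w $ j * v $ l) * P $ j $ l)"
  by (simp add: inner_vec_def matrix_vector_mult_def sum_distrib_left mult_ac)

lemma (in prob_space) indep_core:
  fixes A :: "nat \<Rightarrow> 'a \<Rightarrow> real^'i::finite^'i" and x0 :: "real^'i"
    and \<psi> :: "real^'i \<Rightarrow> real" and \<phi> :: "real^'i^'i \<Rightarrow> real" and ca cb :: real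
  assumes A_meas: "\<And>t. A t \<in> borel_measurable M"
    and A_indep: "indep_vars (\<lambda>_. borel) A UNIV"
    and \<psi>: "\<psi> \<in> borel_measurable borel" and \<phi>: "\<phi> \<in> borel_measurable borel"
    and b\<psi>: "\<And>\<omega>. \<omega> \<in> space M \<Longrightarrow> \<bar>\<psi> (xproc A x0 t \<omega>)\<bar> \<le> ca"
    and b\<phi>: "\<And>\<omega>. \<omega> \<in> space M \<Longrightarrow> \<bar>\<phi> (A t \<omega>)\<bar> \<le> cb"
  shows "expectation (\<lambda>\<omega>. \<psi> (xproc A x0 t \<omega>) * \<phi> (A t \<omega>))
       = expectation (\<lambda>\<omega>. \<psi> (xproc A x0 t \<omega>)) * expectation (\<lambda>\<omega>. \<phi> (A t \<omega>))"
proof -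
  have ind: "indep_var (PiM {..<t} (\<lambda>_. borel)) (\<lambda>\<omega>. restrict (\<lambda>i. A i \<omega>) {..<t})
      (PiM {t} (\<lambda>_. borel)) (\<lambda>\<omega>. restrict (\<lambda>i. A i \<omega>) {t})"
    by (rule indep_var_restrict[OF A_indep]) auto
  have m1: "(\<lambda>h. \<psi> (xp x0 h t)) \<in> borel_measurable (PiM {..<t} (\<lambda>_. borel))"
    by (rule measurable_compose[OF xp_meas \<psi>]) simp
  have m2: "(\<lambda>h. \<phi> (h t)) \<in> borel_measurable (PiM {t} (\<lambda>_. borel))"
    by (rule measurable_compose[OF measurable_component_singleton[where i=t and I="{t}" and M="\<lambda>_. borel"] \<phi>]) simp
  have "indep_var borel ((\<lambda>h. \<psi> (xp x0 h t)) \<circ> (\<lambda>\<omega>. restrict (\<lambda>i. A i \<omega>) {..<t}))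
      borel ((\<lambda>h. \<phi> (h t)) \<circ> (\<lambda>\<omega>. restrict (\<lambda>i. A i \<omega>) {t}))"
    by (rule indep_var_compose[OF ind m1 m2])
  moreover have "((\<lambda>h. \<psi> (xp x0 h t)) \<circ> (\<lambda>\<omega>. restrict (\<lambda>i. A i \<omega>) {..<t}))
     = (\<lambda>\<omega>. \<psi> (xproc A x0 t \<omega>))"
  proof
    fix \<omega>
    have "xp x0 (restrict (\<lambda>i. A i \<omega>) {..<t}) t = xp x0 (\<lambda>i. A i \<omega>) t"
      by (rule xp_cong) simp
    then show "((\<lambda>h. \<psi> (xp x0 h t)) \<circ> (\<lambda>\<omega>. restrict (\<lambda>i. A i \<omega>) {..<t})) \<omega>
     = \<psi> (xproc A x0 t \<omega>)" by (simp add: xproc_xp)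
  qed
  moreover have "((\<lambda>h. \<phi> (h t)) \<circ> (\<lambda>\<omega>. restrict (\<lambda>i. A i \<omega>) {t})) = (\<lambda>\<omega>. \<phi> (A t \<omega>))"
    by auto
  ultimately have ind2: "indep_var borel (\<lambda>\<omega>. \<psi> (xproc A x0 t \<omega>)) borel (\<lambda>\<omega>. \<phi> (A t \<omega>))"
    by simp
  have i1: "integrable M (\<lambda>\<omega>. \<psi> (xproc A x0 t \<omega>))"
    by (rule integrable_const_bound[where B=ca])
       (auto intro!: AE_I2 b\<psi> measurable_compose[OF xproc_meas[OF A_meas] \<psi>])
  have i2: "integrable M (\<lambda>\<omega>. \<phi> (A t \<omega>))"
    by (rule integrable_const_bound[where B=cb])
       (auto intro!: AE_I2 b\<phi> measurable_compose[OF A_meas \<phi>])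
  show ?thesis by (rule indep_var_lebesgue_integral[OF ind2 i1 i2])
qed



lemma step_stoch:
  fixes B :: "real^'i::finite^'i"
  assumes "(\<Sum>l\<in>UNIV. B $ i $ l) = 1"
  shows "(x - laplacian B *v x) $ i = (\<Sum>j\<in>UNIV. B $ i $ j * x $ j)"
proof -
  have r: "(\<Sum>j\<in>UNIV. g j) = g i + (\<Sum>j\<in>UNIV - {i}. g j)" for g :: "'i \<Rightarrow> real"
    by (simp add: sum.remove)
  have h1: "(laplacian B *v x) $ i = (\<Sum>k\<in>UNIV - {i}. B $ i $ k) * x $ i - (\<Sum>j\<in>UNIV - {i}. B $ i $ j * x $ j)"
    unfolding matrix_vector_mult_def vec_lambda_beta
    by (subst r) (simp add: lap_nth sum_negf)
  have h2: "(\<Sum>j\<in>UNIV. B $ i $ j * x $ j) = B $ i $ i * x $ i + (\<Sum>j\<in>UNIV - {i}. B $ i $ j * x $ j)"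
    by (rule r)
  have h3: "B $ i $ i = 1 - (\<Sum>k\<in>UNIV - {i}. B $ i $ k)"
    using assms r[of "\<lambda>l. B $ i $ l"] by simp
  show ?thesis
    unfolding vector_minus_component h1 h2 h3 by (simp add: algebra_simps)
qed

lemma step_bound:
  fixes B :: "real^'i::finite^'i"
  assumes "(\<Sum>l\<in>UNIV. B $ i $ l) = 1" "\<And>j. B $ i $ j \<ge> 0" "\<And>j. \<bar>x $ j\<bar> \<le> c"
  shows "\<bar>(x - laplacian B *v x) $ i\<bar> \<le> c"
proof -
  have "\<bar>\<Sum>j\<in>UNIV. B $ i $ j * x $ j\<bar> \<le> (\<Sum>j\<in>UNIV. \<bar>B $ i $ j * x $ j\<bar>)"
    by (rule sum_abs)
  also have "\<dots> \<le> (\<Sum>j\<in>UNIV. B $ i $ j * c)"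
    by (intro sum_mono) (simp add: abs_mult assms(2) mult_left_mono assms(3))
  also have "\<dots> = c" using assms(1) by (simp add: sum_distrib_right[symmetric])
  finally show ?thesis using step_stoch[OF assms(1)] by simp
qed

lemma xproc_bound:
  fixes x0 :: "real^'i::finite"
  assumes "\<And>t i j. A t \<omega> $ i $ j \<ge> 0" "\<And>t i. (\<Sum>l\<in>UNIV. A t \<omega> $ i $ l) = 1"
  shows "\<bar>xproc A x0 t \<omega> $ i\<bar> \<le> (\<Sum>j\<in>UNIV. \<bar>x0 $ j\<bar>)"
proof (induction t arbitrary: i)
  case 0
  show ?case by simp (rule member_le_sum, auto)
next
  case (Suc t)
  then show ?case by (simp del: vector_minus_component) (intro step_bound assms)
qed

lemma lap_bound:
  fixes B :: "real^'i::finite^'i"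
  assumes "(\<Sum>l\<in>UNIV. B $ i $ l) = 1" "\<And>j. B $ i $ j \<ge> 0"
  shows "\<bar>laplacian B $ i $ j\<bar> \<le> 1"
proof (cases "i = j")
  case True
  have "(\<Sum>k\<in>UNIV - {i}. B $ i $ k) \<le> (\<Sum>k\<in>UNIV. B $ i $ k)"
    by (intro sum_mono2) (auto simp: assms)
  moreover have "(\<Sum>k\<in>UNIV - {i}. B $ i $ k) \<ge> 0" by (intro sum_nonneg) (simp add: assms)
  ultimately show ?thesis using True assms by (simp add: lap_nth)
next
  case False
  have "B $ i $ j \<le> (\<Sum>k\<in>UNIV. B $ i $ k)"
    by (rule member_le_sum) (auto simp: assms)
  then show ?thesis using False assms by (simp add: lap_nth)
qed

definition mbd :: "real \<Rightarrow> real^'i::finite^'j::finite \<Rightarrow> bool" where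
  "mbd c P \<longleftrightarrow> (\<forall>i j. \<bar>P $ i $ j\<bar> \<le> c)"

lemma mbd_mult:
  fixes P :: "real^'k::finite^'i::finite" and Q :: "real^'j::finite^'k"
  assumes "mbd a P" "mbd b Q"
  shows "mbd (real CARD('k) * a * b) (P ** Q)"
  unfolding mbd_def
proof (intro allI)
  fix i j
  have "\<bar>(P ** Q) $ i $ j\<bar> \<le> (\<Sum>k\<in>UNIV. \<bar>P $ i $ k * Q $ k $ j\<bar>)"
    unfolding matrix_matrix_mult_def by (simp add: sum_abs)
  also have "\<dots> \<le> (\<Sum>k\<in>(UNIV::'k set). a * b)"
    using assms unfolding mbd_def
    by (intro sum_mono) (simp add: abs_mult mult_mono' )
  finally show "\<bar>(P ** Q) $ i $ j\<bar> \<le> real CARD('k) * a * b" by simp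
qed

lemma mbd_add: assumes "mbd a P" "mbd b Q" shows "mbd (a + b) (P + Q)"
  unfolding mbd_def
proof (intro allI)
  fix i j
  have "\<bar>P $ i $ j\<bar> \<le> a" "\<bar>Q $ i $ j\<bar> \<le> b" using assms by (auto simp: mbd_def)
  then show "\<bar>(P + Q) $ i $ j\<bar> \<le> a + b" by simp
qed

lemma mbd_diff: assumes "mbd a P" "mbd b Q" shows "mbd (a + b) (P - Q)"
  unfolding mbd_def
proof (intro allI)
  fix i j
  have "\<bar>P $ i $ j\<bar> \<le> a" "\<bar>Q $ i $ j\<bar> \<le> b" using assms by (auto simp: mbd_def)
  then show "\<bar>(P - Q) $ i $ j\<bar> \<le> a + b" by simp
qed

lemma mbd_transpose: "mbd a (P::real^'i::finite^'i) \<Longrightarrow> mbd a (transpose P)"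
  unfolding mbd_def transpose_def by simp

lemma mbd_ones: "mbd 1 ones_mat"
  unfolding mbd_def ones_mat_def by simp

lemma mbd_lap:
  fixes B :: "real^'i::finite^'i"
  assumes "\<And>i. (\<Sum>l\<in>UNIV. B $ i $ l) = 1" "\<And>i j. B $ i $ j \<ge> 0"
  shows "mbd 1 (laplacian B)"
  unfolding mbd_def using lap_bound assms by blast

definition mmeas :: "(real^'i::finite^'i \<Rightarrow> real^'i^'i) \<Rightarrow> bool" where
  "mmeas F \<longleftrightarrow> (\<forall>i j. (\<lambda>B. F B $ i $ j) \<in> borel_measurable borel)"

lemma mmeas_mult: "mmeas F \<Longrightarrow> mmeas G \<Longrightarrow> mmeas (\<lambda>B. F B ** G B)"
  unfolding mmeas_def matrix_matrix_mult_def by (simp add: borel_measurable_sum borel_measurable_times)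
lemma mmeas_add: "mmeas F \<Longrightarrow> mmeas G \<Longrightarrow> mmeas (\<lambda>B. F B + G B)"
  unfolding mmeas_def by (simp add: borel_measurable_add)
lemma mmeas_diff: "mmeas F \<Longrightarrow> mmeas G \<Longrightarrow> mmeas (\<lambda>B. F B - G B)"
  unfolding mmeas_def by (simp add: borel_measurable_diff)
lemma mmeas_transpose: "mmeas F \<Longrightarrow> mmeas (\<lambda>B. transpose (F B))"
  unfolding mmeas_def transpose_def by simp
lemma mmeas_const: "mmeas (\<lambda>B. C)"
  unfolding mmeas_def by simp
lemma mmeas_lap: "mmeas laplacian"
  unfolding mmeas_def by (intro allI lap_entry_meas) simp

lemma inner_transpose: "(x::real^'i::finite) \<bullet> (transpose P *v y) = (P *v x) \<bullet> y"
  by (simp add: inner_vec_def matrix_vector_mult_def transpose_def sum_distrib_left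
      sum_distrib_right mult_ac) (rule sum.swap)

lemma ones_mat_mult: "ones_mat *v y = (ones_vec \<bullet> y) *\<^sub>R ones_vec"
  by (simp add: vec_eq_iff ones_mat_def ones_vec_def matrix_vector_mult_def inner_vec_def)

lemma sq_form:
  fixes L :: "real^'i::finite^'i"
  shows "(ones_vec \<bullet> (L *v x))^2 = x \<bullet> ((transpose L ** ones_mat ** L) *v x)"
proof -
  have "(transpose L ** ones_mat ** L) *v x = (ones_vec \<bullet> (L *v x)) *\<^sub>R (transpose L *v ones_vec)"
    by (simp add: matrix_vector_mul_assoc[symmetric] ones_mat_mult matrix_vector_mult_scaleR)
  then have "x \<bullet> ((transpose L ** ones_mat ** L) *v x) = (ones_vec \<bullet> (L *v x)) * ((L *v x) \<bullet> ones_vec)"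
    by (simp only: inner_scaleR_right inner_transpose)
  then show ?thesis
    by (simp add: power2_eq_square inner_commute)
qed

lemma norm_step:
  fixes L :: "real^'i::finite^'i"
  shows "(x - L *v x) \<bullet> (x - L *v x) = x \<bullet> x - x \<bullet> ((L + transpose L - transpose L ** L) *v x)"
proof -
  have e: "(L + transpose L - transpose L ** L) *v x = L *v x + transpose L *v x - transpose L *v (L *v x)"
    by (simp add: matrix_vector_mult_add_rdistrib matrix_vector_mult_diff_rdistrib matrix_vector_mul_assoc)
  have "x \<bullet> ((L + transpose L - transpose L ** L) *v x) = x \<bullet> (L *v x) + (L *v x) \<bullet> x - (L *v x) \<bullet> (L *v x)"
    unfolding e inner_diff_right inner_add_right inner_transpose ..
  then show ?thesis
    by (simp add: inner_diff_left inner_diff_right inner_commute)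
qed

lemma avg_inner: "avg y = (ones_vec \<bullet> y) / real CARD('i)" for y :: "real^'i::finite"
  by (simp add: avg_def inner_vec_def ones_vec_def)



lemma abs_mult_le: "\<bar>a\<bar> \<le> ca \<Longrightarrow> \<bar>b\<bar> \<le> cb \<Longrightarrow> \<bar>a * b\<bar> \<le> ca * cb" for a b ca cb :: real
  by (simp add: abs_mult mult_mono')

lemma integral_dsum:
  fixes f :: "'j \<Rightarrow> 'l \<Rightarrow> 'a \<Rightarrow> real"
  assumes "\<And>j l. integrable M (f j l)"
  shows "integral\<^sup>L M (\<lambda>\<omega>. \<Sum>j\<in>J. \<Sum>l\<in>K. f j l \<omega>) = (\<Sum>j\<in>J. \<Sum>l\<in>K. integral\<^sup>L M (f j l))"
proof -
  have "integral\<^sup>L M (\<lambda>\<omega>. \<Sum>j\<in>J. \<Sum>l\<in>K. f j l \<omega>) = (\<Sum>j\<in>J. integral\<^sup>L M (\<lambda>\<omega>. \<Sum>l\<in>K. f j l \<omega>))"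
    by (rule Bochner_Integration.integral_sum) (intro Bochner_Integration.integrable_sum assms)
  also have "\<dots> = (\<Sum>j\<in>J. \<Sum>l\<in>K. integral\<^sup>L M (f j l))"
    by (intro sum.cong refl Bochner_Integration.integral_sum assms)
  finally show ?thesis .
qed

lemma (in prob_space) quadE:
  fixes A :: "nat \<Rightarrow> 'a \<Rightarrow> real^'i::finite^'i" and x0 :: "real^'i"
    and \<Phi> :: "real^'i^'i \<Rightarrow> real^'i^'i" and \<rho> :: "real^'i \<Rightarrow> real" and w :: "real^'i \<Rightarrow> real^'i"
  assumes A_meas: "\<And>t. A t \<in> borel_measurable M"
    and A_indep: "indep_vars (\<lambda>_. borel) A UNIV"
    and Xb: "\<And>\<omega> j. \<omega> \<in> space M \<Longrightarrow> \<bar>xproc A x0 t \<omega> $ j\<bar> \<le> cx"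
    and \<Phi>m: "mmeas \<Phi>" and \<Phi>b: "\<And>\<omega>. \<omega> \<in> space M \<Longrightarrow> mbd cp (\<Phi> (A t \<omega>))"
    and \<rho>m: "\<rho> \<in> borel_measurable borel" and \<rho>b: "\<And>\<omega>. \<omega> \<in> space M \<Longrightarrow> \<bar>\<rho> (xproc A x0 t \<omega>)\<bar> \<le> cr"
    and wm: "w \<in> borel_measurable borel" and wb: "\<And>\<omega> j. \<omega> \<in> space M \<Longrightarrow> \<bar>w (xproc A x0 t \<omega>) $ j\<bar> \<le> cw"
  shows "expectation (\<lambda>\<omega>. \<rho> (xproc A x0 t \<omega>) * (w (xproc A x0 t \<omega>) \<bullet> (\<Phi> (A t \<omega>) *v xproc A x0 t \<omega>)))
       = expectation (\<lambda>\<omega>. \<rho> (xproc A x0 t \<omega>) * (w (xproc A x0 t \<omega>) \<bullet> (mat_expectation M (\<lambda>\<omega>. \<Phi> (A t \<omega>)) *v xproc A x0 t \<omega>)))"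
proof -
  define X where "X = (\<lambda>\<omega>. xproc A x0 t \<omega>)"
  define P where "P = mat_expectation M (\<lambda>\<omega>. \<Phi> (A t \<omega>))"
  define \<psi> where "\<psi> = (\<lambda>j l v. \<rho> v * w v $ j * (v::real^'i) $ l)"
  have Xm: "X \<in> borel_measurable M" unfolding X_def by (rule xproc_meas[OF A_meas])
  have idm: "(\<lambda>v::real^'i. v $ l) \<in> borel_measurable borel" for l
    by (intro borel_measurable_continuous_onI continuous_on_component continuous_on_id)
  have \<psi>m: "\<psi> j l \<in> borel_measurable borel" for j l
    unfolding \<psi>_def by (intro borel_measurable_times \<rho>m nth_meas wm idm)
  have \<psi>b: "\<omega> \<in> space M \<Longrightarrow> \<bar>\<psi> j l (X \<omega>)\<bar> \<le> cr * cw * cx" for \<omega> j l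
    unfolding \<psi>_def X_def by (intro abs_mult_le \<rho>b wb Xb)
  have \<phi>m: "(\<lambda>B. \<Phi> B $ j $ l) \<in> borel_measurable borel" for j l
    using \<Phi>m unfolding mmeas_def by blast
  have \<phi>b: "\<omega> \<in> space M \<Longrightarrow> \<bar>\<Phi> (A t \<omega>) $ j $ l\<bar> \<le> cp" for \<omega> j l
    using \<Phi>b unfolding mbd_def by blast
  have key: "expectation (\<lambda>\<omega>. \<psi> j l (X \<omega>) * \<Phi> (A t \<omega>) $ j $ l)
      = expectation (\<lambda>\<omega>. \<psi> j l (X \<omega>)) * expectation (\<lambda>\<omega>. \<Phi> (A t \<omega>) $ j $ l)" for j l
    unfolding X_def
    by (rule indep_core[where ca="cr * cw * cx" and cb=cp, OF A_meas A_indep \<psi>m \<phi>m])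
       (use \<psi>b \<phi>b in \<open>auto simp: X_def\<close>)
  have int1: "integrable M (\<lambda>\<omega>. \<psi> j l (X \<omega>) * \<Phi> (A t \<omega>) $ j $ l)" for j l
    by (rule integrable_const_bound[where B="cr * cw * cx * cp"])
       (auto intro!: AE_I2 abs_mult_le \<psi>b \<phi>b borel_measurable_times
         measurable_compose[OF Xm \<psi>m] measurable_compose[OF A_meas \<phi>m])
  have int2: "integrable M (\<lambda>\<omega>. \<psi> j l (X \<omega>) * P $ j $ l)" for j l
    by (rule integrable_const_bound[where B="cr * cw * cx * \<bar>P $ j $ l\<bar>"])
       (auto intro!: AE_I2 abs_mult_le \<psi>b borel_measurable_times
         measurable_compose[OF Xm \<psi>m])
  have "expectation (\<lambda>\<omega>. \<rho> (X \<omega>) * (w (X \<omega>) \<bullet> (\<Phi> (A t \<omega>) *v X \<omega>)))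
      = expectation (\<lambda>\<omega>. \<Sum>j\<in>UNIV. \<Sum>l\<in>UNIV. \<psi> j l (X \<omega>) * \<Phi> (A t \<omega>) $ j $ l)"
    unfolding \<psi>_def by (simp only: quad_expand)
  also have "\<dots> = (\<Sum>j\<in>UNIV. \<Sum>l\<in>UNIV. expectation (\<lambda>\<omega>. \<psi> j l (X \<omega>) * \<Phi> (A t \<omega>) $ j $ l))"
    by (rule integral_dsum[where f="\<lambda>j l \<omega>. \<psi> j l (X \<omega>) * \<Phi> (A t \<omega>) $ j $ l", OF int1])
  also have "\<dots> = (\<Sum>j\<in>UNIV. \<Sum>l\<in>UNIV. expectation (\<lambda>\<omega>. \<psi> j l (X \<omega>) * P $ j $ l))"
    by (simp add: key P_def mat_expectation_def)
  also have "\<dots> = expectation (\<lambda>\<omega>. \<Sum>j\<in>UNIV. \<Sum>l\<in>UNIV. \<psi> j l (X \<omega>) * P $ j $ l)"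
    by (rule integral_dsum[where f="\<lambda>j l \<omega>. \<psi> j l (X \<omega>) * P $ j $ l", OF int2, symmetric])
  also have "\<dots> = expectation (\<lambda>\<omega>. \<rho> (X \<omega>) * (w (X \<omega>) \<bullet> (P *v X \<omega>)))"
    unfolding \<psi>_def by (simp only: quad_expand)
  finally show ?thesis unfolding X_def P_def .
qed



lemma avg_meas: "(\<lambda>v::real^'i::finite. avg v) \<in> borel_measurable borel"
  unfolding avg_def
  by (intro borel_measurable_divide borel_measurable_sum borel_measurable_const
      borel_measurable_continuous_onI continuous_on_component continuous_on_id)

lemma avg_bound:
  fixes v :: "real^'i::finite"
  assumes "\<And>j. \<bar>v $ j\<bar> \<le> c"
  shows "\<bar>avg v\<bar> \<le> c"
proof -
  have "\<bar>\<Sum>i\<in>UNIV. v $ i\<bar> \<le> (\<Sum>i\<in>UNIV. \<bar>v $ i\<bar>)" by (rule sum_abs)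
  also have "\<dots> \<le> (\<Sum>i\<in>(UNIV::'i set). c)" by (intro sum_mono assms)
  finally have "\<bar>\<Sum>i\<in>UNIV. v $ i\<bar> \<le> real CARD('i) * c" by simp
  then show ?thesis unfolding avg_def by (simp add: divide_le_eq mult.commute)
qed

lemma norm_decomp:
  fixes x :: "real^'i::finite"
  shows "x \<bullet> x = real CARD('i) * Vdis x + real CARD('i) * (avg x)^2"
proof -
  define a where "a = avg x"
  define N where "N = real CARD('i)"
  have N0: "N > 0" unfolding N_def by simp
  have s: "(\<Sum>i\<in>UNIV. x $ i) = N * a" unfolding a_def avg_def N_def by simp
  have "(\<Sum>i\<in>UNIV. (x $ i - a)^2) = (\<Sum>i\<in>UNIV. (x $ i)^2) - 2 * a * (\<Sum>i\<in>UNIV. x $ i) + N * a^2"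
    by (simp add: power2_diff sum.distrib sum_subtractf sum_distrib_left N_def mult_ac)
  then have "(\<Sum>i\<in>UNIV. (x $ i)^2) = (\<Sum>i\<in>UNIV. (x $ i - a)^2) + N * a^2"
    using s by (simp add: power2_eq_square algebra_simps)
  moreover have "N * Vdis x = (\<Sum>i\<in>UNIV. (x $ i - a)^2)"
    unfolding Vdis_def a_def N_def by simp
  moreover have "x \<bullet> x = (\<Sum>i\<in>UNIV. (x $ i)^2)" by (simp add: inner_vec_def power2_eq_square)
  ultimately show ?thesis unfolding N_def a_def by simp
qed

lemma qf_meas:
  fixes P :: "'a \<Rightarrow> real^'i::finite^'i" and u v :: "'a \<Rightarrow> real^'i"
  assumes "\<And>j l. (\<lambda>\<omega>. P \<omega> $ j $ l) \<in> borel_measurable M"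
    "\<And>j. (\<lambda>\<omega>. u \<omega> $ j) \<in> borel_measurable M" "\<And>j. (\<lambda>\<omega>. v \<omega> $ j) \<in> borel_measurable M"
  shows "(\<lambda>\<omega>. u \<omega> \<bullet> (P \<omega> *v v \<omega>)) \<in> borel_measurable M"
  unfolding inner_vec_def matrix_vector_mult_def
  by (simp, intro borel_measurable_sum borel_measurable_times assms)

lemma qf_bound:
  fixes P :: "real^'i::finite^'i" and u v :: "real^'i"
  assumes "\<And>j. \<bar>u $ j\<bar> \<le> a" "mbd b P" "\<And>j. \<bar>v $ j\<bar> \<le> c"
  shows "\<bar>u \<bullet> (P *v v)\<bar> \<le> real CARD('i) * real CARD('i) * (a * c * b)"
proof -
  have e: "u \<bullet> (P *v v) = (\<Sum>j\<in>UNIV. \<Sum>l\<in>UNIV. (1 * u $ j * v $ l) * P $ j $ l)"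
    using quad_expand[of 1 u P v] by simp
  have "\<bar>\<Sum>j\<in>UNIV. \<Sum>l\<in>UNIV. (1 * u $ j * v $ l) * P $ j $ l\<bar>
      \<le> (\<Sum>j\<in>UNIV. \<bar>\<Sum>l\<in>UNIV. (1 * u $ j * v $ l) * P $ j $ l\<bar>)" by (rule sum_abs)
  also have "\<dots> \<le> (\<Sum>j\<in>(UNIV::'i set). \<Sum>l\<in>(UNIV::'i set). a * c * b)"
  proof (intro sum_mono)
    fix j
    have "\<bar>\<Sum>l\<in>UNIV. (1 * u $ j * v $ l) * P $ j $ l\<bar> \<le> (\<Sum>l\<in>UNIV. \<bar>(1 * u $ j * v $ l) * P $ j $ l\<bar>)"
      by (rule sum_abs)
    also have "\<dots> \<le> (\<Sum>l\<in>(UNIV::'i set). a * c * b)"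
      using assms(2) unfolding mbd_def
      by (intro sum_mono) (simp add: abs_mult_le assms(1,3) del: mult_1)
    finally show "\<bar>\<Sum>l\<in>UNIV. (1 * u $ j * v $ l) * P $ j $ l\<bar> \<le> (\<Sum>l\<in>(UNIV::'i set). a * c * b)" .
  qed
  finally show ?thesis unfolding e by simp
qed

lemma mbd_const: "mbd (\<Sum>i\<in>UNIV. \<Sum>j\<in>UNIV. \<bar>P $ i $ j\<bar>) (P::real^'i::finite^'j::finite)"
  unfolding mbd_def
proof (intro allI)
  fix i j
  have "\<bar>P $ i $ j\<bar> \<le> (\<Sum>j\<in>UNIV. \<bar>P $ i $ j\<bar>)" by (rule member_le_sum) auto
  also have "\<dots> \<le> (\<Sum>i\<in>UNIV. \<Sum>j\<in>UNIV. \<bar>P $ i $ j\<bar>)"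
    by (rule member_le_sum[where f="\<lambda>i. \<Sum>j\<in>UNIV. \<bar>P $ i $ j\<bar>"]) (auto intro: sum_nonneg)
  finally show "\<bar>P $ i $ j\<bar> \<le> (\<Sum>i\<in>UNIV. \<Sum>j\<in>UNIV. \<bar>P $ i $ j\<bar>)" .
qed

lemma mbd_id: "mbd 1 (mat 1 :: real^'i::finite^'i)"
  unfolding mbd_def by (simp add: mat_def)

lemma bint:
  assumes "prob_space M" "f \<in> borel_measurable M" "\<And>\<omega>. \<omega> \<in> space M \<Longrightarrow> \<bar>f \<omega>\<bar> \<le> (C::real)"
  shows "integrable M f"
proof -
  interpret prob_space M by fact
  show ?thesis by (rule integrable_const_bound[where B=C]) (auto intro!: AE_I2 assms)
qed

lemma tendsto_avg:
  fixes X :: "nat \<Rightarrow> real^'i::finite"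
  assumes "X \<longlonglongrightarrow> y"
  shows "(\<lambda>t. avg (X t)) \<longlonglongrightarrow> avg y"
  unfolding avg_def by (intro tendsto_intros assms) simp

lemma avg_const: "avg (c *\<^sub>R (ones_vec :: real^'i::finite)) = c"
  by (simp add: avg_def ones_vec_def)

lemma avg_step: "avg (x - L *v x) = avg x - (ones_vec \<bullet> (L *v x)) / real CARD('i)"
  for x :: "real^'i::finite"
  by (simp add: avg_inner inner_diff_right diff_divide_distrib)



lemma mv_scaleR: "((c::real) *\<^sub>R P) *v v = c *\<^sub>R (P *v (v::real^'i::finite))"
  by (simp add: vec_eq_iff matrix_vector_mult_def sum_distrib_left mult.assoc)

lemma arith_final:
  fixes N g S Zt Z0 V m :: real
  assumes N: "N > 0" and g: "g > 0" and h1: "S + g / N^2 * Zt \<le> g / N^2 * Z0"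
    and h2: "N * (S + m^2) \<le> Zt" and h3: "Z0 = N * V + N * m^2"
  shows "S \<le> g / (N + g) * V"
proof -
  have eq: "g / N^2 * (N * X) = g / N * X" for X
    using N by (simp add: power2_eq_square)
  have "g / N^2 * (N * (S + m^2)) \<le> g / N^2 * Zt"
    using h2 g N by (intro mult_left_mono) auto
  then have "S + g / N^2 * (N * (S + m^2)) \<le> g / N^2 * (N * (V + m^2))"
    using h1 unfolding h3 by (simp add: distrib_left)
  then have "S + g / N * (S + m^2) \<le> g / N * (V + m^2)"
    unfolding eq .
  then have "N * (S + g / N * (S + m^2)) \<le> N * (g / N * (V + m^2))"
    using N by (intro mult_left_mono) auto
  then have "N * S + g * (S + m^2) \<le> g * (V + m^2)"
    using N by (simp add: distrib_left)
  then have "S * (N + g) \<le> g * V" by (simp add: algebra_simps)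
  then show ?thesis using N g by (simp add: field_simps)
qed

theorem theorem1:
  fixes M :: "'w measure" and A :: "nat \<Rightarrow> 'w \<Rightarrow> real^'i^'i::finite"
    and x0 :: "real^'i" and \<gamma> :: real
  assumes P: "prob_space M"
    and A_meas: "\<And>t. A t \<in> borel_measurable M"
    and A_indep: "prob_space.indep_vars M (\<lambda>_. borel) A UNIV"
    and A_ident: "\<And>t. distr M borel (A t) = distr M borel (A 0)"
    and A_nonneg: "\<And>t \<omega> i j. \<omega> \<in> space M \<Longrightarrow> A t \<omega> $ i $ j \<ge> 0"
    and A_stoch: "\<And>t \<omega> i. \<omega> \<in> space M \<Longrightarrow> (\<Sum>l\<in>UNIV. A t \<omega> $ i $ l) = 1"
    and H1: "\<And>t. ones_vec v* mat_expectation M (\<lambda>\<omega>. laplacian (A t \<omega>)) = 0"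
    and gpos: "\<gamma> > 0"
    and H2: "\<And>t. loewner_le
        (mat_expectation M (\<lambda>\<omega>. transpose (laplacian (A t \<omega>)) ** ones_mat ** laplacian (A t \<omega>)))
        (\<gamma> *\<^sub>R mat_expectation M (\<lambda>\<omega>. laplacian (A t \<omega>) + transpose (laplacian (A t \<omega>))
              - transpose (laplacian (A t \<omega>)) ** laplacian (A t \<omega>)))"
  shows "(\<forall>t. prob_space.expectation M (\<lambda>\<omega>. (avg (xproc A x0 t \<omega>) - avg x0)^2)
            \<le> \<gamma> / (real CARD('i) + \<gamma>) * Vdis x0)
     \<and> (\<forall>xinf \<in> borel_measurable M.
          (AE \<omega> in M. (\<lambda>t. xproc A x0 t \<omega>) \<longlonglongrightarrow> xinf \<omega> *\<^sub>R ones_vec)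
          \<longrightarrow> prob_space.expectation M (\<lambda>\<omega>. (xinf \<omega> - avg x0)^2)
                \<le> \<gamma> / (real CARD('i) + \<gamma>) * Vdis x0)"
proof -
  interpret prob_space M by (rule P)
  define N where "N = real CARD('i)"
  define m where "m = avg x0"
  define c0 where "c0 = (\<Sum>j\<in>UNIV. \<bar>x0 $ j\<bar>)"
  define Q where "Q = (\<lambda>t. mat_expectation M (\<lambda>\<omega>. transpose (laplacian (A t \<omega>)) ** ones_mat ** laplacian (A t \<omega>)))"
  define R where "R = (\<lambda>t. mat_expectation M (\<lambda>\<omega>. laplacian (A t \<omega>) + transpose (laplacian (A t \<omega>))
              - transpose (laplacian (A t \<omega>)) ** laplacian (A t \<omega>)))"
  define s where "s = (\<lambda>t \<omega>. ones_vec \<bullet> (laplacian (A t \<omega>) *v xproc A x0 t \<omega>))"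
  define e where "e = (\<lambda>t \<omega>. avg (xproc A x0 t \<omega>) - m)"
  define S where "S = (\<lambda>t. expectation (\<lambda>\<omega>. (e t \<omega>)^2))"
  define Z where "Z = (\<lambda>t. expectation (\<lambda>\<omega>. xproc A x0 t \<omega> \<bullet> xproc A x0 t \<omega>))"
  have N0: "N > 0" unfolding N_def by simp
  have Xb: "\<And>t \<omega> j. \<omega> \<in> space M \<Longrightarrow> \<bar>xproc A x0 t \<omega> $ j\<bar> \<le> c0"
    unfolding c0_def by (rule xproc_bound) (auto intro: A_nonneg A_stoch)
  have Xm: "\<And>t. (\<lambda>\<omega>. xproc A x0 t \<omega>) \<in> borel_measurable M"
    by (rule xproc_meas[OF A_meas])
  have Xcm: "\<And>t j. (\<lambda>\<omega>. xproc A x0 t \<omega> $ j) \<in> borel_measurable M"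
    by (rule nth_meas[OF Xm])
  have Lcm: "\<And>t j l. (\<lambda>\<omega>. laplacian (A t \<omega>) $ j $ l) \<in> borel_measurable M"
    by (rule lap_entry_meas[OF A_meas])
  have Lb: "\<And>t \<omega>. \<omega> \<in> space M \<Longrightarrow> mbd 1 (laplacian (A t \<omega>))"
    by (rule mbd_lap) (auto intro: A_nonneg A_stoch)
  have onesb: "\<And>j. \<bar>(ones_vec::real^'i) $ j\<bar> \<le> 1" by (simp add: ones_vec_def)
  have c0pos: "c0 \<ge> 0" unfolding c0_def by (intro sum_nonneg) simp

  have sm: "\<And>t. s t \<in> borel_measurable M"
    unfolding s_def by (intro qf_meas Lcm Xcm borel_measurable_const)
  have sb0: "\<And>t \<omega>. \<omega> \<in> space M \<Longrightarrow> \<bar>s t \<omega>\<bar> \<le> N * N * (1 * c0 * 1)"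
    unfolding s_def N_def by (intro qf_bound onesb Lb Xb)
  have sb: "\<And>t \<omega>. \<omega> \<in> space M \<Longrightarrow> \<bar>s t \<omega>\<bar> \<le> N * N * c0"
    using sb0 by simp
  have em: "\<And>t. e t \<in> borel_measurable M"
    unfolding e_def by (intro borel_measurable_diff borel_measurable_const measurable_compose[OF Xm avg_meas])
  have eb: "\<And>t \<omega>. \<omega> \<in> space M \<Longrightarrow> \<bar>e t \<omega>\<bar> \<le> c0 + \<bar>m\<bar>"
  proof -
    fix t \<omega> assume "\<omega> \<in> space M"
    then have "\<bar>avg (xproc A x0 t \<omega>)\<bar> \<le> c0" by (intro avg_bound Xb)
    then show "\<bar>e t \<omega>\<bar> \<le> c0 + \<bar>m\<bar>" unfolding e_def by linarith
  qed
  have zm: "\<And>t. (\<lambda>\<omega>. xproc A x0 t \<omega> \<bullet> xproc A x0 t \<omega>) \<in> borel_measurable M"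
    by (intro borel_measurable_inner Xm)
  have zb: "\<And>t \<omega>. \<omega> \<in> space M \<Longrightarrow> \<bar>xproc A x0 t \<omega> \<bullet> xproc A x0 t \<omega>\<bar> \<le> N * N * (c0 * c0 * 1)"
  proof -
    fix t \<omega> assume w: "\<omega> \<in> space M"
    have "\<bar>xproc A x0 t \<omega> \<bullet> (mat 1 *v xproc A x0 t \<omega>)\<bar> \<le> N * N * (c0 * c0 * 1)"
      unfolding N_def by (rule qf_bound) (auto intro: Xb[OF w] mbd_id)
    then show "\<bar>xproc A x0 t \<omega> \<bullet> xproc A x0 t \<omega>\<bar> \<le> N * N * (c0 * c0 * 1)" by simp
  qed

  have int_s: "\<And>t. integrable M (s t)"
    by (rule bint[OF P sm sb])
  have int_e: "\<And>t. integrable M (e t)"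
    by (rule bint[OF P em eb])
  have e2b: "\<And>t \<omega>. \<omega> \<in> space M \<Longrightarrow> \<bar>(e t \<omega>)^2\<bar> \<le> (c0 + \<bar>m\<bar>) * (c0 + \<bar>m\<bar>)"
    using abs_mult_le[OF eb eb] by (metis power2_eq_square)
  have int_e2: "\<And>t. integrable M (\<lambda>\<omega>. (e t \<omega>)^2)"
    by (rule bint[OF P _ e2b]) (intro borel_measurable_power em)
  have int_es: "\<And>t. integrable M (\<lambda>\<omega>. e t \<omega> * s t \<omega>)"
    by (rule bint[OF P, where C="(c0 + \<bar>m\<bar>) * (N * N * c0)"])
       (auto intro!: borel_measurable_times em sm abs_mult_le eb sb)
  have s2b: "\<And>t \<omega>. \<omega> \<in> space M \<Longrightarrow> \<bar>(s t \<omega>)^2\<bar> \<le> (N * N * c0) * (N * N * c0)"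
    using abs_mult_le[OF sb sb] by (metis power2_eq_square)
  have int_s2: "\<And>t. integrable M (\<lambda>\<omega>. (s t \<omega>)^2)"
    by (rule bint[OF P _ s2b]) (intro borel_measurable_power sm)
  have int_z: "\<And>t. integrable M (\<lambda>\<omega>. xproc A x0 t \<omega> \<bullet> xproc A x0 t \<omega>)"
    by (rule bint[OF P zm zb])

  have qint: "\<And>t \<Phi> c. mmeas \<Phi> \<Longrightarrow> (\<And>\<omega>. \<omega> \<in> space M \<Longrightarrow> mbd c (\<Phi> (A t \<omega>))) \<Longrightarrow>
      integrable M (\<lambda>\<omega>. xproc A x0 t \<omega> \<bullet> (\<Phi> (A t \<omega>) *v xproc A x0 t \<omega>))"
  proof -
    fix t \<Phi> c assume mm: "mmeas \<Phi>" and mb: "\<And>\<omega>. \<omega> \<in> space M \<Longrightarrow> mbd c (\<Phi> (A t \<omega>))"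
    have "(\<lambda>\<omega>. \<Phi> (A t \<omega>) $ j $ l) \<in> borel_measurable M" for j l
      using mm unfolding mmeas_def by (intro measurable_compose[OF A_meas]) blast
    then have "(\<lambda>\<omega>. xproc A x0 t \<omega> \<bullet> (\<Phi> (A t \<omega>) *v xproc A x0 t \<omega>)) \<in> borel_measurable M"
      by (intro qf_meas Xcm)
    moreover have "\<bar>xproc A x0 t \<omega> \<bullet> (\<Phi> (A t \<omega>) *v xproc A x0 t \<omega>)\<bar> \<le> N * N * (c0 * c0 * c)"
      if "\<omega> \<in> space M" for \<omega>
      unfolding N_def by (intro qf_bound Xb mb that)
    ultimately show "integrable M (\<lambda>\<omega>. xproc A x0 t \<omega> \<bullet> (\<Phi> (A t \<omega>) *v xproc A x0 t \<omega>))"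
      by (intro bint[OF P]) auto
  qed
  have mmQ: "mmeas (\<lambda>B. transpose (laplacian B) ** ones_mat ** laplacian B)"
    by (intro mmeas_mult mmeas_transpose mmeas_lap mmeas_const)
  have mmR: "mmeas (\<lambda>B. laplacian B + transpose (laplacian B) - transpose (laplacian B) ** laplacian B)"
    by (intro mmeas_diff mmeas_add mmeas_mult mmeas_transpose mmeas_lap)
  have mbQ: "\<And>t \<omega>. \<omega> \<in> space M \<Longrightarrow> mbd (real CARD('i) * real CARD('i))
        (transpose (laplacian (A t \<omega>)) ** ones_mat ** laplacian (A t \<omega>))"
    using mbd_mult[OF mbd_mult[OF mbd_transpose[OF Lb] mbd_ones] Lb] by simp
  have mbR: "\<And>t \<omega>. \<omega> \<in> space M \<Longrightarrow> mbd (2 + real CARD('i))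
        (laplacian (A t \<omega>) + transpose (laplacian (A t \<omega>)) - transpose (laplacian (A t \<omega>)) ** laplacian (A t \<omega>))"
    using mbd_diff[OF mbd_add[OF Lb mbd_transpose[OF Lb]] mbd_mult[OF mbd_transpose[OF Lb] Lb]] by simp

  have e_step: "\<And>t \<omega>. e (Suc t) \<omega> = e t \<omega> - s t \<omega> / N"
    by (simp add: e_def s_def N_def avg_step)
  have Es0: "\<And>t. expectation (s t) = 0"
  proof -
    fix t
    have q: "expectation (\<lambda>\<omega>. 1 * (ones_vec \<bullet> (laplacian (A t \<omega>) *v xproc A x0 t \<omega>)))
        = expectation (\<lambda>\<omega>. 1 * (ones_vec \<bullet> (mat_expectation M (\<lambda>\<omega>. laplacian (A t \<omega>)) *v xproc A x0 t \<omega>)))"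
      by (rule quadE[where \<rho>="\<lambda>_. 1" and w="\<lambda>_. ones_vec" and \<Phi>=laplacian and cx=c0 and cp=1
            and cr=1 and cw=1, OF A_meas A_indep]) (auto intro: Xb Lb mmeas_lap onesb)
    then show "expectation (s t) = 0"
      unfolding s_def by (simp add: dot_lmul_matrix[symmetric] H1)
  qed
  have Ees0: "\<And>t. expectation (\<lambda>\<omega>. e t \<omega> * s t \<omega>) = 0"
  proof -
    fix t
    have q: "expectation (\<lambda>\<omega>. (avg (xproc A x0 t \<omega>) - m) * (ones_vec \<bullet> (laplacian (A t \<omega>) *v xproc A x0 t \<omega>)))
        = expectation (\<lambda>\<omega>. (avg (xproc A x0 t \<omega>) - m) * (ones_vec \<bullet> (mat_expectation M (\<lambda>\<omega>. laplacian (A t \<omega>)) *v xproc A x0 t \<omega>)))"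
      by (rule quadE[where \<rho>="\<lambda>v. avg v - m" and w="\<lambda>_. ones_vec" and \<Phi>=laplacian and cx=c0 and cp=1
            and cr="c0 + \<bar>m\<bar>" and cw=1, OF A_meas A_indep])
         (auto intro: Xb Lb mmeas_lap onesb eb[unfolded e_def] borel_measurable_diff avg_meas)
    then show "expectation (\<lambda>\<omega>. e t \<omega> * s t \<omega>) = 0"
      unfolding s_def e_def by (simp add: dot_lmul_matrix[symmetric] H1)
  qed
  have Es2: "\<And>t. expectation (\<lambda>\<omega>. (s t \<omega>)^2) = expectation (\<lambda>\<omega>. xproc A x0 t \<omega> \<bullet> (Q t *v xproc A x0 t \<omega>))"
  proof -
    fix t
    have q: "expectation (\<lambda>\<omega>. 1 * (xproc A x0 t \<omega> \<bullet> ((transpose (laplacian (A t \<omega>)) ** ones_mat ** laplacian (A t \<omega>)) *v xproc A x0 t \<omega>)))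
        = expectation (\<lambda>\<omega>. 1 * (xproc A x0 t \<omega> \<bullet> (Q t *v xproc A x0 t \<omega>)))"
      unfolding Q_def
      by (rule quadE[where \<rho>="\<lambda>_. 1" and w="\<lambda>v. v" and \<Phi>="\<lambda>B. transpose (laplacian B) ** ones_mat ** laplacian B"
            and cx=c0 and cp="real CARD('i) * real CARD('i)"
            and cr=1 and cw=c0, OF A_meas A_indep]) (auto intro: Xb mbQ mmQ)
    then show "expectation (\<lambda>\<omega>. (s t \<omega>)^2) = expectation (\<lambda>\<omega>. xproc A x0 t \<omega> \<bullet> (Q t *v xproc A x0 t \<omega>))"
      unfolding s_def by (simp add: sq_form)
  qed
  have ER: "\<And>t. expectation (\<lambda>\<omega>. xproc A x0 t \<omega> \<bullet> ((laplacian (A t \<omega>) + transpose (laplacian (A t \<omega>)) - transpose (laplacian (A t \<omega>)) ** laplacian (A t \<omega>)) *v xproc A x0 t \<omega>))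
       = expectation (\<lambda>\<omega>. xproc A x0 t \<omega> \<bullet> (R t *v xproc A x0 t \<omega>))"
  proof -
    fix t
    have q: "expectation (\<lambda>\<omega>. 1 * (xproc A x0 t \<omega> \<bullet> ((laplacian (A t \<omega>) + transpose (laplacian (A t \<omega>)) - transpose (laplacian (A t \<omega>)) ** laplacian (A t \<omega>)) *v xproc A x0 t \<omega>)))
        = expectation (\<lambda>\<omega>. 1 * (xproc A x0 t \<omega> \<bullet> (R t *v xproc A x0 t \<omega>)))"
      unfolding R_def
      by (rule quadE[where \<rho>="\<lambda>_. 1" and w="\<lambda>v. v" and \<Phi>="\<lambda>B. laplacian B + transpose (laplacian B) - transpose (laplacian B) ** laplacian B"
            and cx=c0 and cp="2 + real CARD('i)"
            and cr=1 and cw=c0, OF A_meas A_indep]) (auto intro: Xb mbR mmR)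
    then show "?thesis t" by simp
  qed
  have QR: "\<And>t v. v \<bullet> (Q t *v v) \<le> \<gamma> * (v \<bullet> (R t *v v))"
  proof -
    fix t and v :: "real^'i"
    have "v \<bullet> ((Q t - \<gamma> *\<^sub>R R t) *v v) \<le> 0"
      using H2[of t] unfolding loewner_le_def neg_semidef_def Q_def R_def by blast
    then show "v \<bullet> (Q t *v v) \<le> \<gamma> * (v \<bullet> (R t *v v))"
      by (simp add: matrix_vector_mult_diff_rdistrib mv_scaleR inner_diff_right)
  qed

  have Nne: "N \<noteq> 0" using N0 by simp
  have Ee_step: "\<And>t. expectation (e (Suc t)) = expectation (e t)"
  proof -
    fix t
    have "e (Suc t) = (\<lambda>\<omega>. e t \<omega> - s t \<omega> / N)" by (rule ext) (rule e_step)
    then show "expectation (e (Suc t)) = expectation (e t)"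
      using int_e[of t] int_s[of t] Es0[of t] by simp
  qed
  have S_step: "\<And>t. S (Suc t) = S t + expectation (\<lambda>\<omega>. (s t \<omega>)^2) / N^2"
  proof -
    fix t
    have "(\<lambda>\<omega>. (e (Suc t) \<omega>)^2) = (\<lambda>\<omega>. (e t \<omega>)^2 - (2 / N) * (e t \<omega> * s t \<omega>) + (1 / N^2) * (s t \<omega>)^2)"
      by (rule ext) (simp add: e_step power2_eq_square field_simps Nne)
    then show "S (Suc t) = S t + expectation (\<lambda>\<omega>. (s t \<omega>)^2) / N^2"
      unfolding S_def using int_e2[of t] int_es[of t] int_s2[of t] Ees0[of t] by simp
  qed
  have intRw: "\<And>t. integrable M (\<lambda>\<omega>. xproc A x0 t \<omega> \<bullet> ((laplacian (A t \<omega>) + transpose (laplacian (A t \<omega>)) - transpose (laplacian (A t \<omega>)) ** laplacian (A t \<omega>)) *v xproc A x0 t \<omega>))"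
    by (rule qint[OF mmR mbR])
  have intQ: "\<And>t. integrable M (\<lambda>\<omega>. xproc A x0 t \<omega> \<bullet> (Q t *v xproc A x0 t \<omega>))"
    subgoal for t by (rule qint[of "\<lambda>_. Q t", OF mmeas_const mbd_const])
    done
  have intR: "\<And>t. integrable M (\<lambda>\<omega>. xproc A x0 t \<omega> \<bullet> (R t *v xproc A x0 t \<omega>))"
    subgoal for t by (rule qint[of "\<lambda>_. R t", OF mmeas_const mbd_const])
    done
  have Z_step: "\<And>t. Z (Suc t) = Z t - expectation (\<lambda>\<omega>. xproc A x0 t \<omega> \<bullet> ((laplacian (A t \<omega>) + transpose (laplacian (A t \<omega>)) - transpose (laplacian (A t \<omega>)) ** laplacian (A t \<omega>)) *v xproc A x0 t \<omega>))"
    unfolding Z_def using int_z intRw by (simp add: norm_step)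
  have key: "\<And>t. S (Suc t) + \<gamma> / N^2 * Z (Suc t) \<le> S t + \<gamma> / N^2 * Z t"
  proof -
    fix t
    have "expectation (\<lambda>\<omega>. xproc A x0 t \<omega> \<bullet> (Q t *v xproc A x0 t \<omega>))
        \<le> expectation (\<lambda>\<omega>. \<gamma> * (xproc A x0 t \<omega> \<bullet> (R t *v xproc A x0 t \<omega>)))"
      by (rule integral_mono[OF intQ]) (auto intro: QR intR)
    then have "expectation (\<lambda>\<omega>. (s t \<omega>)^2) \<le> \<gamma> * (Z t - Z (Suc t))"
      unfolding Es2 Z_step ER by simp
    then have "expectation (\<lambda>\<omega>. (s t \<omega>)^2) / N^2 \<le> \<gamma> / N^2 * (Z t - Z (Suc t))"
      using N0 by (simp add: divide_right_mono)
    then show "S (Suc t) + \<gamma> / N^2 * Z (Suc t) \<le> S t + \<gamma> / N^2 * Z t"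
      unfolding S_step by (simp add: right_diff_distrib)
  qed
  have S0: "S 0 = 0" by (simp add: S_def e_def m_def)
  have Ee0: "expectation (e 0) = 0" by (simp add: e_def m_def)
  have ind: "S t + \<gamma> / N^2 * Z t \<le> \<gamma> / N^2 * Z 0 \<and> expectation (e t) = 0" for t
  proof (induction t)
    case 0 then show ?case using S0 Ee0 by simp
  next
    case (Suc t) then show ?case using key[of t] Ee_step[of t] by simp
  qed
  have Z0: "Z 0 = N * Vdis x0 + N * m^2"
    by (simp add: Z_def norm_decomp N_def m_def prob_space)
  have Zlow: "N * (S t + m^2) \<le> Z t" for t
  proof -
    have Vnn: "Vdis v \<ge> 0" for v :: "real^'i" unfolding Vdis_def by (intro divide_nonneg_nonneg sum_nonneg) auto
    have pw: "N * ((e t \<omega>)^2 + 2 * m * e t \<omega> + m^2) \<le> xproc A x0 t \<omega> \<bullet> xproc A x0 t \<omega>" for \<omega>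
    proof -
      have "(e t \<omega>)^2 + 2 * m * e t \<omega> + m^2 = (avg (xproc A x0 t \<omega>))^2"
        unfolding e_def by (simp add: power2_eq_square algebra_simps)
      then show ?thesis
        using norm_decomp[of "xproc A x0 t \<omega>"] Vnn[of "xproc A x0 t \<omega>"] N0
        unfolding N_def[symmetric] by (simp add: add_increasing)
    qed
    have "expectation (\<lambda>\<omega>. N * ((e t \<omega>)^2 + 2 * m * e t \<omega> + m^2)) \<le> Z t"
      unfolding Z_def by (rule integral_mono) (use int_e2 int_e int_z pw in auto)
    moreover have "expectation (\<lambda>\<omega>. N * ((e t \<omega>)^2 + 2 * m * e t \<omega> + m^2)) = N * (S t + m^2)"
      using int_e2[of t] int_e[of t] ind[of t] unfolding S_def by (simp add: prob_space)
    ultimately show ?thesis by (metis mult_eq_0_iff order_refl)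
  qed
  have part1: "expectation (\<lambda>\<omega>. (avg (xproc A x0 t \<omega>) - avg x0)^2) \<le> \<gamma> / (real CARD('i) + \<gamma>) * Vdis x0" for t
  proof -
    have "S t \<le> \<gamma> / (N + \<gamma>) * Vdis x0"
      by (rule arith_final[OF N0 gpos conjunct1[OF ind[of t]] Zlow Z0])
    then show ?thesis unfolding S_def e_def m_def N_def .
  qed

  have part2: "expectation (\<lambda>\<omega>. (xinf \<omega> - avg x0)^2) \<le> \<gamma> / (real CARD('i) + \<gamma>) * Vdis x0"
    if xm: "xinf \<in> borel_measurable M"
      and conv: "AE \<omega> in M. (\<lambda>t. xproc A x0 t \<omega>) \<longlonglongrightarrow> xinf \<omega> *\<^sub>R ones_vec" for xinf
  proof -
    have lim: "AE \<omega> in M. (\<lambda>t. (e t \<omega>)^2) \<longlonglongrightarrow> (xinf \<omega> - m)^2"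
      using conv
    proof (rule eventually_mono)
      fix \<omega> assume "(\<lambda>t. xproc A x0 t \<omega>) \<longlonglongrightarrow> xinf \<omega> *\<^sub>R ones_vec"
      then have "(\<lambda>t. avg (xproc A x0 t \<omega>)) \<longlonglongrightarrow> xinf \<omega>"
        using tendsto_avg avg_const by metis
      then show "(\<lambda>t. (e t \<omega>)^2) \<longlonglongrightarrow> (xinf \<omega> - m)^2"
        unfolding e_def by (intro tendsto_intros)
    qed
    have "(\<lambda>t. expectation (\<lambda>\<omega>. (e t \<omega>)^2)) \<longlonglongrightarrow> expectation (\<lambda>\<omega>. (xinf \<omega> - m)^2)"
    proof (rule integral_dominated_convergence[where w="\<lambda>_. (c0 + \<bar>m\<bar>) * (c0 + \<bar>m\<bar>)"])
      show "(\<lambda>\<omega>. (xinf \<omega> - m)^2) \<in> borel_measurable M"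
        using xm by measurable
      show "(\<lambda>\<omega>. (e t \<omega>)^2) \<in> borel_measurable M" for t
        by (intro borel_measurable_power em)
      show "integrable M (\<lambda>_. (c0 + \<bar>m\<bar>) * (c0 + \<bar>m\<bar>))" by simp
      show "AE \<omega> in M. (\<lambda>t. (e t \<omega>)^2) \<longlonglongrightarrow> (xinf \<omega> - m)^2" by (rule lim)
      show "AE \<omega> in M. norm ((e t \<omega>)^2) \<le> (c0 + \<bar>m\<bar>) * (c0 + \<bar>m\<bar>)" for t
        by (intro AE_I2) (simp only: real_norm_def e2b)
    qed
    moreover have "expectation (\<lambda>\<omega>. (e t \<omega>)^2) \<le> \<gamma> / (real CARD('i) + \<gamma>) * Vdis x0" for t
      using part1[of t] unfolding e_def m_def .
    ultimately show ?thesis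
      unfolding m_def by (intro LIMSEQ_le_const2) auto
  qed
  show ?thesis using part1 part2 by blast
qed

end
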